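(* In the setting of the context, let $\mathcal S=(O_1,\dots,O_M)\in\mathcal Z^M$, let $m\in\{1,\dots,M\}$ and $O'_m\in\mathcal Z$, and let $\mathcal S^m$ be $\mathcal S$ with $O_m$ replaced by $O'_m$. Run SGD for $T$ steps on $\mathcal S$ and on $\mathcal S^m$ from the same initialization $\Psi_0$ and with the same index sequence $j_0,\dots,j_{T-1}$. Then $$\mathbb E_A\big[\|\Psi_{\mathcal S,T}-\Psi_{\mathcal S^m,T}\|_2\big]\le\frac{2\beta'\sqrt d}{M}\sum_{t=1}^T(1+\beta' d)^{t-1},$$ and consequently, for every $O\in\mathcal Z$, $$\big|\mathbb E_A[\mathcal L(O,\Psi_{\mathcal S,T})-\mathcal L(O,\Psi_{\mathcal S^m,T})]\big|\le\frac{2\beta\beta' d}{M}\sum_{t=1}^T(1+\beta' d)^{t-1}.$$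
   Context: An instance is a binary vector in $\{0,1\}^D$ formed by concatenating $d$ one-hot vectors, so it has exactly $d$ ones. Each instance $i$ is represented by $u_i=\sum_{i'}c_{ii'}x_{i'}$, a convex combination (weights $c_{ii'}\ge0$ summing to $1$) of such binary vectors; hence $u_i\in[0,1]^D$, $\|u_i\|_1\le d$. A proxy datum is a finite nonempty list $O=((u_1,y_1),\dots,(u_n,y_n))$ of such vectors with labels $y_i\in\mathcal Y$; $\mathcal Z$ is the set of all proxy data. The model predicts $h(u;\Psi)=\sigma(u\cdot\Psi)$, $\Psi\in\mathbb R^D$, $\sigma$ the logistic sigmoid, and $\mathcal L(O,\Psi)=\frac1n\sum_{i=1}^n l(y_i,h(u_i;\Psi))$ with $l$ differentiable in its second argument. Assumptions: (A1) $|l(y,a)-l(y,b)|\le\beta|a-b|$ for all $y,a,b$; (A2) for all $y,y'$, all admissible $u,u'$ and all $\Psi,\Psi'$, $\|\nabla_\Psi l(y,h(u;\Psi))-\nabla_\Psi l(y',h(u';\Psi'))\|_2\le\beta'\|\nabla_\Psi h(u;\Psi)-\nabla_\Psi h(u';\Psi')\|_2$. SGD with step size $\alpha\in(0,1]$ on a sequence $\mathcal S=(O_1,\dots,O_M)$: indices $j_0,\dots,j_{T-1}$ are drawn i.i.d. uniformly from $\{1,\dots,M\}$ (expectation $\mathbb E_A$ is over these indices), and $\Psi_{\mathcal S,t+1}=\Psi_{\mathcal S,t}-\alpha\nabla_\Psi\mathcal L(O_{j_t},\Psi_{\mathcal S,t})$, $\Psi_{\mathcal S,0}=\Psi_0$.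 *)

theory Defs
  imports "HOL-Analysis.Analysis"
begin

text \<open>Index type 'n of coordinates (so D = CARD('n)); the coordinates are partitioned
  into d blocks by blk :: 'n => nat (block k is {i. blk i = k}, k < d).\<close>

definition valid_blocks :: "('n::finite \<Rightarrow> nat) \<Rightarrow> nat \<Rightarrow> bool" where
  "valid_blocks blk d \<longleftrightarrow> (\<forall>i. blk i < d) \<and> (\<forall>k<d. \<exists>i. blk i = k)"

definition instances :: "('n::finite \<Rightarrow> nat) \<Rightarrow> nat \<Rightarrow> (real^'n) set" where
  "instances blk d = {x. (\<forall>i. x$i = 0 \<or> x$i = 1) \<and>
                         (\<forall>k<d. card {i. blk i = k \<and> x$i = 1} = 1)}"

definition admissible :: "('n::finite \<Rightarrow> nat) \<Rightarrow> nat \<Rightarrow> (real^'n) set" where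
  "admissible blk d = convex hull (instances blk d)"

definition proxy_data :: "('n::finite \<Rightarrow> nat) \<Rightarrow> nat \<Rightarrow> ((real^'n) \<times> 'y) list set" where
  "proxy_data blk d = {Ob. Ob \<noteq> [] \<and> (\<forall>p\<in>set Ob. fst p \<in> admissible blk d)}"

definition sigmoid :: "real \<Rightarrow> real" where
  "sigmoid z = 1 / (1 + exp (- z))"

definition model :: "real^'n \<Rightarrow> real^'n \<Rightarrow> real" where
  "model u \<Psi> = sigmoid (u \<bullet> \<Psi>)"

definition loss :: "('y \<Rightarrow> real \<Rightarrow> real) \<Rightarrow> ((real^'n) \<times> 'y) list \<Rightarrow> real^'n \<Rightarrow> real" where
  "loss l Ob \<Psi> = (\<Sum>p\<leftarrow>Ob. l (snd p) (model (fst p) \<Psi>)) / real (length Ob)"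

definition grad :: "('a::euclidean_space \<Rightarrow> real) \<Rightarrow> 'a \<Rightarrow> 'a" where
  "grad f x = (THE g. (f has_derivative (\<lambda>v. g \<bullet> v)) (at x))"

text \<open>SGD iterate after processing indices js = [j_0,...,j_{T-1}] (0-based indices into S).\<close>
definition sgd :: "('y \<Rightarrow> real \<Rightarrow> real) \<Rightarrow> real \<Rightarrow> ((real^'n) \<times> 'y) list list
                   \<Rightarrow> real^'n \<Rightarrow> nat list \<Rightarrow> real^'n" where
  "sgd l \<alpha> S \<Psi>0 js = foldl (\<lambda>\<Psi> j. \<Psi> - \<alpha> *\<^sub>R grad (loss l (S ! j)) \<Psi>) \<Psi>0 js"

text \<open>Expectation over i.i.d. uniform indices j_0..j_{T-1} in {0..<M}.\<close>
definition expect_A :: "nat \<Rightarrow> nat \<Rightarrow> (nat list \<Rightarrow> real) \<Rightarrow> real" where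
  "expect_A M T f = (\<Sum>js\<in>{js. length js = T \<and> set js \<subseteq> {..<M}}. f js) / real M ^ T"

end

theory Submission imports Defs begin
definition sd :: "real \<Rightarrow> real" where "sd z = sigmoid z * (1 - sigmoid z)"

lemma sig_pos: "0 < sigmoid z" "sigmoid z < 1"
  unfolding sigmoid_def by (auto simp: divide_simps add_pos_pos)

lemma sig_deriv: "(sigmoid has_real_derivative sd z) (at z)"
proof -
  have "((\<lambda>z. 1 / (1 + exp (- z))) has_real_derivative
        - (exp (-z) * (-1)) / ((1 + exp (-z)) * (1 + exp (-z)))) (at z)"
    by (auto intro!: derivative_eq_intros simp: add_pos_pos)
       (smt (verit) exp_gt_zero)
  moreover have "- (exp (-z) * (-1)) / ((1 + exp (-z)) * (1 + exp (-z))) = sd z"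
  proof -
    have e: "1 + exp (-z) > 0" by (smt (verit) exp_gt_zero)
    show ?thesis unfolding sd_def sigmoid_def using e by (simp add: field_simps)
  qed
  ultimately show ?thesis unfolding sigmoid_def[abs_def] by simp
qed

lemma sd_bounds: "0 \<le> sd z" "sd z \<le> 1/4"
proof -
  have a: "0 < sigmoid z" "sigmoid z < 1" using sig_pos by auto
  show "0 \<le> sd z" unfolding sd_def using a by simp
  have "0 \<le> (sigmoid z - 1/2)^2" by simp
  then show "sd z \<le> 1/4" unfolding sd_def by (simp add: power2_eq_square algebra_simps)
qed

lemma sig_lip: "\<bar>sigmoid a - sigmoid b\<bar> \<le> \<bar>a - b\<bar>"
proof -
  have g: "\<And>a b. a < b \<Longrightarrow> \<bar>sigmoid b - sigmoid a\<bar> \<le> \<bar>b - a\<bar>"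
  proof -
    fix a b :: real assume "a < b"
    from MVT2[OF this, of sigmoid sd] sig_deriv obtain z where
      "sigmoid b - sigmoid a = (b - a) * sd z" by blast
    moreover have "\<bar>sd z\<bar> \<le> 1" using sd_bounds[of z] by simp
    ultimately show "\<bar>sigmoid b - sigmoid a\<bar> \<le> \<bar>b - a\<bar>"
      by (simp add: abs_mult) (metis abs_ge_zero mult_left_le mult.commute)
  qed
  show ?thesis
  proof (cases a b rule: linorder_cases)
    case less then show ?thesis using g[of a b] by (simp add: abs_minus_commute)
  next
    case greater then show ?thesis using g[of b a] by simp
  qed simp
qed

lemma sd_lip: "\<bar>sd a - sd b\<bar> \<le> \<bar>a - b\<bar>"
proof -
  have "sd a - sd b = (sigmoid a - sigmoid b) * (1 - sigmoid a - sigmoid b)"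
    unfolding sd_def by (simp add: algebra_simps)
  moreover have "\<bar>1 - sigmoid a - sigmoid b\<bar> \<le> 1" using sig_pos[of a] sig_pos[of b] by auto
  ultimately have "\<bar>sd a - sd b\<bar> \<le> \<bar>sigmoid a - sigmoid b\<bar>"
    by (simp add: abs_mult mult_left_le)
  then show ?thesis using sig_lip[of a b] by linarith
qed

lemma sd_ne: "z \<noteq> 0 \<Longrightarrow> sd z \<noteq> sd 0"
proof
  assume z: "z \<noteq> 0" and e: "sd z = sd 0"
  have "sd 0 = 1/4" unfolding sd_def sigmoid_def by simp
  with e have "(sigmoid z - 1/2)^2 = 0" unfolding sd_def by (simp add: power2_eq_square algebra_simps)
  then have "sigmoid z = 1/2" by simp
  then have "exp (-z) = 1" unfolding sigmoid_def by (simp add: field_simps)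
  then show False using z by simp
qed

lemma grad_eq:
  fixes f :: "'a::euclidean_space \<Rightarrow> real"
  assumes "(f has_derivative (\<lambda>v. g \<bullet> v)) (at x)"
  shows "grad f x = g"
  unfolding grad_def
proof (rule the_equality)
  show "(f has_derivative (\<lambda>v. g \<bullet> v)) (at x)" by (rule assms)
  fix g' assume "(f has_derivative (\<lambda>v. g' \<bullet> v)) (at x)"
  from has_derivative_unique[OF this assms]
  have "\<And>v. g' \<bullet> v = g \<bullet> v" by metis
  from this[of "g' - g"] have "(g' - g) \<bullet> (g' - g) = 0" by (simp add: inner_diff_left)
  then show "g' = g" by simp
qed

lemma model_deriv: "(model u has_derivative (\<lambda>v. (sd (u \<bullet> \<Psi>) *\<^sub>R u) \<bullet> v)) (at \<Psi>)"
proof -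
  have "((\<lambda>\<Psi>. sigmoid (u \<bullet> \<Psi>)) has_derivative (\<lambda>v. (u \<bullet> v) * sd (u \<bullet> \<Psi>))) (at \<Psi>)"
    by (rule DERIV_compose_FDERIV[OF sig_deriv]) (rule bounded_linear.has_derivative[OF bounded_linear_inner_right has_derivative_ident])
  then show ?thesis unfolding model_def[abs_def] by (simp add: mult.commute)
qed

lemma grad_model: "grad (model u) \<Psi> = sd (u \<bullet> \<Psi>) *\<^sub>R u"
  by (rule grad_eq[OF model_deriv])

lemma lm_deriv:
  assumes "\<And>a. l differentiable (at a)"
  shows "((\<lambda>\<Psi>. l (model u \<Psi>)) has_derivative (\<lambda>v. grad (\<lambda>\<Psi>. l (model u \<Psi>)) \<Psi> \<bullet> v)) (at \<Psi>)"
proof -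
  have d: "(l has_real_derivative deriv l (model u \<Psi>)) (at (model u \<Psi>))"
    using assms DERIV_deriv_iff_real_differentiable by blast
  have "((\<lambda>\<Psi>. l (model u \<Psi>)) has_derivative (\<lambda>v. ((sd (u \<bullet> \<Psi>) *\<^sub>R u) \<bullet> v) * deriv l (model u \<Psi>))) (at \<Psi>)"
    by (rule DERIV_compose_FDERIV[OF d model_deriv])
  then have h: "((\<lambda>\<Psi>. l (model u \<Psi>)) has_derivative (\<lambda>v. ((deriv l (model u \<Psi>) * sd (u \<bullet> \<Psi>)) *\<^sub>R u) \<bullet> v)) (at \<Psi>)"
    by (simp add: algebra_simps)
  show ?thesis using h unfolding grad_eq[OF h] .
qed

lemma sum_list_deriv:
  assumes "\<And>p. p \<in> set xs \<Longrightarrow> (F p has_derivative (\<lambda>v. G p \<bullet> v)) (at x)"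
  shows "((\<lambda>\<Psi>. \<Sum>p\<leftarrow>xs. F p \<Psi>) has_derivative (\<lambda>v. (\<Sum>p\<leftarrow>xs. G p) \<bullet> v)) (at x)"
  using assms
proof (induction xs)
  case Nil then show ?case by simp
next
  case (Cons a xs)
  have "((\<lambda>\<Psi>. F a \<Psi> + (\<Sum>p\<leftarrow>xs. F p \<Psi>)) has_derivative (\<lambda>v. G a \<bullet> v + (\<Sum>p\<leftarrow>xs. G p) \<bullet> v)) (at x)"
    using Cons by (intro has_derivative_add) auto
  then show ?case by (simp add: inner_add_left)
qed

lemma loss_grad:
  assumes "\<And>y a. l y differentiable (at a)"
  shows "grad (loss l Ob) \<Psi> = (1 / real (length Ob)) *\<^sub>R (\<Sum>p\<leftarrow>Ob. grad (\<lambda>\<Psi>. l (snd p) (model (fst p) \<Psi>)) \<Psi>)"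
proof -
  let ?G = "\<Sum>p\<leftarrow>Ob. grad (\<lambda>\<Psi>. l (snd p) (model (fst p) \<Psi>)) \<Psi>"
  have s: "((\<lambda>\<Psi>. \<Sum>p\<leftarrow>Ob. l (snd p) (model (fst p) \<Psi>)) has_derivative (\<lambda>v. ?G \<bullet> v)) (at \<Psi>)"
    by (rule sum_list_deriv) (rule lm_deriv[OF assms])
  have "((\<lambda>\<Psi>. (1 / real (length Ob)) * (\<Sum>p\<leftarrow>Ob. l (snd p) (model (fst p) \<Psi>))) has_derivative
        (\<lambda>v. (1 / real (length Ob)) * (?G \<bullet> v))) (at \<Psi>)"
    by (rule has_derivative_mult_right[OF s])
  then have "(loss l Ob has_derivative (\<lambda>v. ((1 / real (length Ob)) *\<^sub>R ?G) \<bullet> v)) (at \<Psi>)"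
    unfolding loss_def[abs_def] by simp
  then show ?thesis by (rule grad_eq)
qed

definition goodset :: "nat \<Rightarrow> (real^'n::finite) set" where
  "goodset d = {u. (\<forall>i. 0 \<le> u$i \<and> u$i \<le> 1) \<and> (\<Sum>i\<in>UNIV. u$i) = real d}"

lemma convex_goodset: "convex (goodset d)"
proof (rule convexI)
  fix x y :: "real^'n" and u v :: real
  assume xg: "x \<in> goodset d" and yg: "y \<in> goodset d" and uv: "0 \<le> u" "0 \<le> v" "u + v = 1"
  have x: "\<And>i. 0 \<le> x $ i \<and> x $ i \<le> 1" "(\<Sum>i\<in>UNIV. x $ i) = real d"
    using xg unfolding goodset_def by auto
  have y: "\<And>i. 0 \<le> y $ i \<and> y $ i \<le> 1" "(\<Sum>i\<in>UNIV. y $ i) = real d"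
    using yg unfolding goodset_def by auto
  have c1: "\<And>i. 0 \<le> u * x $ i + v * y $ i" using x y uv by simp
  have c2: "\<And>i. u * x $ i + v * y $ i \<le> 1"
  proof -
    fix i
    have "u * x $ i \<le> u" "v * y $ i \<le> v" using x y uv by (auto simp: mult_left_le)
    then show "u * x $ i + v * y $ i \<le> 1" using uv by simp
  qed
  have "(\<Sum>i\<in>UNIV. u * x $ i + v * y $ i) = u * (\<Sum>i\<in>UNIV. x $ i) + v * (\<Sum>i\<in>UNIV. y $ i)"
    by (simp add: sum.distrib sum_distrib_left)
  then have c3: "(\<Sum>i\<in>UNIV. u * x $ i + v * y $ i) = real d"
    using x y uv by (simp add: distrib_right[symmetric])
  show "u *\<^sub>R x + v *\<^sub>R y \<in> goodset d"
    unfolding goodset_def using c1 c2 c3 by simp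
qed

lemma instances_good:
  assumes vb: "valid_blocks blk d" and x: "x \<in> instances blk d"
  shows "x \<in> goodset d"
proof -
  have x01: "\<And>i. x$i = 0 \<or> x$i = 1" and c: "\<And>k. k < d \<Longrightarrow> card {i. blk i = k \<and> x$i = 1} = 1"
    using x unfolding instances_def by auto
  have bl: "\<And>i. blk i < d" using vb unfolding valid_blocks_def by auto
  have "(\<Sum>i\<in>UNIV. x$i) = (\<Sum>i\<in>UNIV. if x$i = 1 then 1 else 0)"
    by (rule sum.cong) (use x01 in auto)
  also have "\<dots> = real (card {i. x$i = 1})"
    by (simp add: sum.If_cases)
  also have "{i. x$i = 1} = (\<Union>k\<in>{..<d}. {i. blk i = k \<and> x$i = 1})" using bl by auto
  also have "card \<dots> = (\<Sum>k\<in>{..<d}. card {i. blk i = k \<and> x$i = 1})"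
    by (rule card_UN_disjoint) auto
  also have "\<dots> = d" using c by simp
  finally have s: "(\<Sum>i\<in>UNIV. x$i) = real d" by simp
  have "\<And>i. 0 \<le> x$i \<and> x$i \<le> 1" using x01 by (metis order.refl zero_le_one)
  then show ?thesis unfolding goodset_def using s by simp
qed

lemma adm_good:
  assumes vb: "valid_blocks blk d" and u: "u \<in> admissible blk d"
  shows "u \<in> goodset d"
proof -
  have "convex hull (instances blk d) \<subseteq> goodset d"
    by (rule hull_minimal) (use instances_good[OF vb] convex_goodset in auto)
  then show ?thesis using u unfolding admissible_def by auto
qed

lemma good_norm2:
  assumes "u \<in> goodset d"
  shows "norm u * norm u \<le> real d" "norm u \<le> sqrt (real d)"
proof -
  have u: "\<And>i. 0 \<le> u$i \<and> u$i \<le> 1" "(\<Sum>i\<in>UNIV. u$i) = real d"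
    using assms unfolding goodset_def by auto
  have "norm u * norm u = u \<bullet> u" by (simp add: dot_square_norm power2_eq_square)
  also have "\<dots> = (\<Sum>i\<in>UNIV. u$i * u$i)" by (simp add: inner_vec_def)
  also have "\<dots> \<le> (\<Sum>i\<in>UNIV. u$i)" by (rule sum_mono) (use u in \<open>simp add: mult_left_le\<close>)
  finally show a: "norm u * norm u \<le> real d" using u by simp
  show "norm u \<le> sqrt (real d)"
    using a by (intro real_le_rsqrt) (simp add: power2_eq_square)
qed

lemma good_nz:
  assumes "u \<in> goodset d" "d > 0" shows "u \<noteq> 0"
  using assms unfolding goodset_def by auto

lemma norm_sum_list_le:
  fixes f :: "'a \<Rightarrow> 'b::real_normed_vector"
  shows "(\<And>p. p \<in> set xs \<Longrightarrow> norm (f p) \<le> B) \<Longrightarrow> norm (sum_list (map f xs)) \<le> real (length xs) * B"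
proof (induction xs)
  case Nil then show ?case by simp
next
  case (Cons a xs)
  have "norm (sum_list (map f (a # xs))) \<le> norm (f a) + norm (sum_list (map f xs))"
    by (simp add: norm_triangle_ineq)
  also have "\<dots> \<le> B + real (length xs) * B" using Cons by (intro add_mono) auto
  finally show ?case by (simp add: algebra_simps)
qed

lemma mean_bound:
  fixes f :: "'a \<Rightarrow> 'b::real_normed_vector"
  assumes "xs \<noteq> []" "\<And>p. p \<in> set xs \<Longrightarrow> norm (f p) \<le> B"
  shows "norm ((1 / real (length xs)) *\<^sub>R sum_list (map f xs)) \<le> B"
proof -
  have n: "real (length xs) > 0" using assms by simp
  have "norm ((1 / real (length xs)) *\<^sub>R sum_list (map f xs)) = norm (sum_list (map f xs)) / real (length xs)"
    using n by simp
  also have "\<dots> \<le> real (length xs) * B / real (length xs)"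
    using norm_sum_list_le[of xs f B] assms n by (intro divide_right_mono) auto
  also have "\<dots> = B" using n by simp
  finally show ?thesis .
qed

lemma sum_list_const_R:
  fixes c :: "'b::real_vector"
  shows "(\<Sum>p\<leftarrow>xs. c) = real (length xs) *\<^sub>R c"
  by (induction xs) (auto simp: algebra_simps)

lemma mean_sub_const:
  fixes f :: "'a \<Rightarrow> 'b::real_normed_vector"
  assumes "xs \<noteq> []"
  shows "(1 / real (length xs)) *\<^sub>R sum_list (map f xs) - c
       = (1 / real (length xs)) *\<^sub>R sum_list (map (\<lambda>p. f p - c) xs)"
  using assms by (simp add: sum_list_subtractf sum_list_const_R scaleR_diff_right)

lemma mean_cross:
  fixes a b :: "'a \<Rightarrow> 'b::real_normed_vector"
  assumes "xs \<noteq> []" "ys \<noteq> []" "\<And>p q. p \<in> set xs \<Longrightarrow> q \<in> set ys \<Longrightarrow> norm (a p - b q) \<le> B"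
  shows "norm ((1 / real (length xs)) *\<^sub>R sum_list (map a xs) - (1 / real (length ys)) *\<^sub>R sum_list (map b ys)) \<le> B"
  unfolding mean_sub_const[OF assms(1)]
proof (rule mean_bound[OF assms(1)])
  fix p assume p: "p \<in> set xs"
  have "a p - (1 / real (length ys)) *\<^sub>R sum_list (map b ys)
      = - ((1 / real (length ys)) *\<^sub>R sum_list (map b ys) - a p)" by simp
  also have "\<dots> = - ((1 / real (length ys)) *\<^sub>R sum_list (map (\<lambda>q. b q - a p) ys))"
    unfolding mean_sub_const[OF assms(2)] ..
  finally have e: "norm (a p - (1 / real (length ys)) *\<^sub>R sum_list (map b ys))
     = norm ((1 / real (length ys)) *\<^sub>R sum_list (map (\<lambda>q. b q - a p) ys))" by simp
  show "norm (a p - (1 / real (length ys)) *\<^sub>R sum_list (map b ys)) \<le> B"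
    unfolding e
    by (rule mean_bound[OF assms(2)]) (use assms(3)[OF p] in \<open>simp add: norm_minus_commute\<close>)
qed

lemma mean_same:
  fixes a b :: "'a \<Rightarrow> 'b::real_normed_vector"
  assumes "xs \<noteq> []" "\<And>p. p \<in> set xs \<Longrightarrow> norm (a p - b p) \<le> B"
  shows "norm ((1 / real (length xs)) *\<^sub>R sum_list (map a xs) - (1 / real (length xs)) *\<^sub>R sum_list (map b xs)) \<le> B"
proof -
  have "(1 / real (length xs)) *\<^sub>R sum_list (map a xs) - (1 / real (length xs)) *\<^sub>R sum_list (map b xs)
      = (1 / real (length xs)) *\<^sub>R sum_list (map (\<lambda>p. a p - b p) xs)"
    by (simp add: sum_list_subtractf scaleR_diff_right)
  then show ?thesis using mean_bound[OF assms(1), of "\<lambda>p. a p - b p" B] assms(2) by simp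
qed

lemma A_eq: "{js. length js = T \<and> set js \<subseteq> {..<M}} = {js. set js \<subseteq> {..<M} \<and> length js = T}"
  by auto

lemma A_fin: "finite {js. length js = T \<and> set js \<subseteq> {..<(M::nat)}}"
  unfolding A_eq by (rule finite_lists_length_eq) simp

lemma A_card: "card {js. length js = T \<and> set js \<subseteq> {..<(M::nat)}} = M ^ T"
  unfolding A_eq by (subst card_lists_length_eq) simp_all

lemma expect_0: "expect_A M 0 f = f []"
proof -
  have "{js. length js = 0 \<and> set js \<subseteq> {..<M}} = {[]}" by auto
  then show ?thesis unfolding expect_A_def by simp
qed

lemma A_Suc: "{js. length js = Suc T \<and> set js \<subseteq> {..<M}}
   = (\<lambda>(js, j). js @ [j]) ` ({js. length js = T \<and> set js \<subseteq> {..<M}} \<times> {..<M})"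
proof (intro equalityI subsetI)
  fix xs assume "xs \<in> {js. length js = Suc T \<and> set js \<subseteq> {..<M}}"
  then have xs: "length xs = Suc T" "set xs \<subseteq> {..<M}" by auto
  then have ne: "xs \<noteq> []" by auto
  have e: "xs = butlast xs @ [last xs]" using ne by simp
  have "set (butlast xs) \<subseteq> {..<M}" "last xs < M"
    using xs ne by (auto dest: in_set_butlastD) (use last_in_set in blast)
  then show "xs \<in> (\<lambda>(js, j). js @ [j]) ` ({js. length js = T \<and> set js \<subseteq> {..<M}} \<times> {..<M})"
    using xs e by (intro image_eqI[of _ _ "(butlast xs, last xs)"]) auto
qed auto

lemma expect_Suc:
  assumes "M > 0"
  shows "expect_A M (Suc T) f = expect_A M T (\<lambda>js. (\<Sum>j<M. f (js @ [j])) / real M)"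
proof -
  let ?A = "{js. length js = T \<and> set js \<subseteq> {..<M}}"
  have inj: "inj_on (\<lambda>(js, j). js @ [j]) (?A \<times> {..<M})"
    by (auto simp: inj_on_def)
  have "sum f {js. length js = Suc T \<and> set js \<subseteq> {..<M}} = (\<Sum>x\<in>?A \<times> {..<M}. f (fst x @ [snd x]))"
    unfolding A_Suc by (subst sum.reindex[OF inj]) (simp add: case_prod_beta)
  also have "\<dots> = (\<Sum>js\<in>?A. \<Sum>j<M. f (js @ [j]))"
    by (simp add: sum.cartesian_product case_prod_beta)
  finally have s: "sum f {js. length js = Suc T \<and> set js \<subseteq> {..<M}} = (\<Sum>js\<in>?A. \<Sum>j<M. f (js @ [j]))" .
  show ?thesis unfolding expect_A_def s
    using assms by (simp add: sum_divide_distrib[symmetric] field_simps)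
qed

lemma expect_mono:
  assumes "\<And>js. length js = T \<Longrightarrow> set js \<subseteq> {..<M} \<Longrightarrow> f js \<le> g js"
  shows "expect_A M T f \<le> expect_A M T g"
  unfolding expect_A_def by (intro divide_right_mono sum_mono) (use assms in auto)

lemma expect_affine:
  assumes "M > 0"
  shows "expect_A M T (\<lambda>js. c * f js + k) = c * expect_A M T f + k"
proof -
  have "real M ^ T > 0" using assms by simp
  then show ?thesis unfolding expect_A_def
    by (simp add: sum.distrib sum_distrib_left[symmetric] A_card field_simps)
qed

lemma expect_abs: "\<bar>expect_A M T f\<bar> \<le> expect_A M T (\<lambda>js. \<bar>f js\<bar>)"
  unfolding expect_A_def by (simp add: abs_div_pos sum_abs divide_right_mono) 

lemma geo: "(\<Sum>t=1..Suc T. (r::real) ^ (t - 1)) = 1 + r * (\<Sum>t=1..T. r ^ (t - 1))"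
proof (induction T)
  case 0 then show ?case by simp
next
  case (Suc T)
  have "(\<Sum>t=1..Suc (Suc T). r ^ (t - 1)) = (\<Sum>t=1..Suc T. r ^ (t - 1)) + r ^ Suc T" by simp
  also have "\<dots> = 1 + r * ((\<Sum>t=1..T. r ^ (t - 1)) + r ^ T)" by (simp only: Suc.IH) (simp add: algebra_simps)
  also have "(\<Sum>t=1..T. r ^ (t - 1)) + r ^ T = (\<Sum>t=1..Suc T. r ^ (t - 1))" by simp
  finally show ?case .
qed

lemma sgd_snoc: "sgd l \<alpha> S \<Psi>0 (js @ [j]) = sgd l \<alpha> S \<Psi>0 js - \<alpha> *\<^sub>R grad (loss l (S ! j)) (sgd l \<alpha> S \<Psi>0 js)"
  by (simp add: sgd_def)

lemma sgd_nil: "sgd l \<alpha> S \<Psi>0 [] = \<Psi>0"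
  by (simp add: sgd_def)

theorem mainTheorem3:
  fixes blk :: "'n::finite \<Rightarrow> nat" and d :: nat
    and l :: "'y \<Rightarrow> real \<Rightarrow> real" and \<beta> \<beta>' \<alpha> :: real
    and S :: "((real^'n) \<times> 'y) list list" and M m T :: nat
    and O' :: "((real^'n) \<times> 'y) list" and \<Psi>0 :: "real^'n"
  assumes blocks: "valid_blocks blk d"
    and diff: "\<And>y a. l y differentiable (at a)"
    and A1: "\<And>y a b. \<bar>l y a - l y b\<bar> \<le> \<beta> * \<bar>a - b\<bar>"
    and A2: "\<And>y y' u u' \<Psi> \<Psi>'. u \<in> admissible blk d \<Longrightarrow> u' \<in> admissible blk d \<Longrightarrow>
              norm (grad (\<lambda>\<Psi>. l y (model u \<Psi>)) \<Psi> - grad (\<lambda>\<Psi>. l y' (model u' \<Psi>)) \<Psi>')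
              \<le> \<beta>' * norm (grad (model u) \<Psi> - grad (model u') \<Psi>')"
    and alpha: "0 < \<alpha>" "\<alpha> \<le> 1"
    and S: "length S = M" "\<forall>Ob\<in>set S. Ob \<in> proxy_data blk d"
    and m: "m < M"
    and O': "O' \<in> proxy_data blk d"
  shows "expect_A M T (\<lambda>js. norm (sgd l \<alpha> S \<Psi>0 js - sgd l \<alpha> (S[m := O']) \<Psi>0 js))
           \<le> 2 * \<beta>' * sqrt d / M * (\<Sum>t=1..T. (1 + \<beta>' * d) ^ (t - 1))
       \<and> (\<forall>Ob\<in>proxy_data blk d.
           \<bar>expect_A M T (\<lambda>js. loss l Ob (sgd l \<alpha> S \<Psi>0 js) - loss l Ob (sgd l \<alpha> (S[m := O']) \<Psi>0 js))\<bar>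
           \<le> 2 * \<beta> * \<beta>' * d / M * (\<Sum>t=1..T. (1 + \<beta>' * d) ^ (t - 1)))"
proof -
  have M0: "M > 0" using m by simp
  have d0: "d > 0" using blocks unfolding valid_blocks_def by (metis not_less0 neq0_conv)
  have beta0: "\<beta> \<ge> 0" using A1[of undefined 1 0] by simp
  have good: "\<And>u. u \<in> admissible blk d \<Longrightarrow> u \<in> goodset d" using adm_good[OF blocks] by blast
  have pd: "\<And>(Ob::((real^'n) \<times> 'y) list). Ob \<in> proxy_data blk d \<Longrightarrow> Ob \<noteq> [] \<and> (\<forall>p\<in>set Ob. fst p \<in> admissible blk d)"
    unfolding proxy_data_def by auto
  have beta'0: "\<beta>' \<ge> 0"
  proof -
    have "S ! 0 \<in> set S" using S(1) M0 by simp
    then have "S ! 0 \<in> proxy_data blk d" using S(2) by blast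
    then obtain p where p: "p \<in> set (S ! 0)" "fst p \<in> admissible blk d"
      using pd by (metis list.set_sel(1))
    define u where "u = fst p"
    have ua: "u \<in> admissible blk d" using p u_def by simp
    have unz: "u \<noteq> 0" using good_nz[OF good[OF ua] d0] .
    have uu: "u \<bullet> u \<noteq> 0" using unz by simp
    have "norm (grad (model u) 0 - grad (model u) u) = \<bar>sd 0 - sd (u \<bullet> u)\<bar> * norm u"
      unfolding grad_model by (simp add: scaleR_diff_left[symmetric])
    moreover have "\<bar>sd 0 - sd (u \<bullet> u)\<bar> > 0" using sd_ne[OF uu] by simp
    moreover have "norm u > 0" using unz by simp
    ultimately have pos: "norm (grad (model u) 0 - grad (model u) u) > 0" by simp
    have "0 \<le> \<beta>' * norm (grad (model u) 0 - grad (model u) u)"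
      using A2[where u=u and u'=u and \<Psi>=0 and \<Psi>'=u, OF ua ua] norm_ge_zero order_trans by blast
    with pos show ?thesis by (simp add: zero_le_mult_iff)
  qed
  have lg: "\<And>(Ob::((real^'n) \<times> 'y) list) \<Psi>. grad (loss l Ob) \<Psi> = (1 / real (length Ob)) *\<^sub>R (\<Sum>p\<leftarrow>Ob. grad (\<lambda>\<Psi>. l (snd p) (model (fst p) \<Psi>)) \<Psi>)"
    by (rule loss_grad[OF diff])
  have K1: "\<And>(Ob::((real^'n) \<times> 'y) list) \<Psi> \<Psi>'. Ob \<in> proxy_data blk d \<Longrightarrow>
      norm (grad (loss l Ob) \<Psi> - grad (loss l Ob) \<Psi>') \<le> \<beta>' * d * norm (\<Psi> - \<Psi>')"
  proof -
    fix Ob :: "((real^'n) \<times> 'y) list" and \<Psi> \<Psi>' assume Ob: "Ob \<in> proxy_data blk d"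
    show "norm (grad (loss l Ob) \<Psi> - grad (loss l Ob) \<Psi>') \<le> \<beta>' * d * norm (\<Psi> - \<Psi>')"
      unfolding lg
    proof (rule mean_same)
      show "Ob \<noteq> []" using pd[OF Ob] by simp
      fix p assume p: "p \<in> set Ob"
      define u where "u = fst p"
      have ua: "u \<in> admissible blk d" using pd[OF Ob] p u_def by simp
      have nu: "norm u * norm u \<le> d" using good_norm2(1)[OF good[OF ua]] .
      have "norm (grad (\<lambda>\<Psi>. l (snd p) (model u \<Psi>)) \<Psi> - grad (\<lambda>\<Psi>. l (snd p) (model u \<Psi>)) \<Psi>')
          \<le> \<beta>' * norm (grad (model u) \<Psi> - grad (model u) \<Psi>')" by (rule A2[OF ua ua])
      also have "norm (grad (model u) \<Psi> - grad (model u) \<Psi>') = \<bar>sd (u \<bullet> \<Psi>) - sd (u \<bullet> \<Psi>')\<bar> * norm u"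
        unfolding grad_model by (simp add: scaleR_diff_left[symmetric])
      also have "\<dots> \<le> \<bar>u \<bullet> \<Psi> - u \<bullet> \<Psi>'\<bar> * norm u" by (intro mult_right_mono sd_lip) simp
      also have "\<bar>u \<bullet> \<Psi> - u \<bullet> \<Psi>'\<bar> \<le> norm u * norm (\<Psi> - \<Psi>')"
        by (metis Cauchy_Schwarz_ineq2 inner_diff_right)
      then have "\<bar>u \<bullet> \<Psi> - u \<bullet> \<Psi>'\<bar> * norm u \<le> (norm u * norm u) * norm (\<Psi> - \<Psi>')"
        by (metis mult.commute mult.left_commute mult_left_mono norm_ge_zero)
      also have "\<dots> \<le> d * norm (\<Psi> - \<Psi>')" by (intro mult_right_mono nu) simp
      finally show "norm (grad (\<lambda>\<Psi>. l (snd p) (model (fst p) \<Psi>)) \<Psi> - grad (\<lambda>\<Psi>. l (snd p) (model (fst p) \<Psi>)) \<Psi>')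
          \<le> \<beta>' * d * norm (\<Psi> - \<Psi>')"
        using beta'0 u_def by (simp add: mult_left_mono mult.assoc)
    qed
  qed
  have K2: "\<And>(Ob::((real^'n) \<times> 'y) list) (Ob'::((real^'n) \<times> 'y) list) \<Psi> \<Psi>'. Ob \<in> proxy_data blk d \<Longrightarrow> Ob' \<in> proxy_data blk d \<Longrightarrow>
      norm (grad (loss l Ob) \<Psi> - grad (loss l Ob') \<Psi>') \<le> 2 * \<beta>' * sqrt d"
  proof -
    fix Ob Ob' :: "((real^'n) \<times> 'y) list" and \<Psi> \<Psi>' assume Ob: "Ob \<in> proxy_data blk d" and Ob': "Ob' \<in> proxy_data blk d"
    show "norm (grad (loss l Ob) \<Psi> - grad (loss l Ob') \<Psi>') \<le> 2 * \<beta>' * sqrt d"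
      unfolding lg
    proof (rule mean_cross)
      show "Ob \<noteq> []" "Ob' \<noteq> []" using pd[OF Ob] pd[OF Ob'] by auto
      fix p q assume p: "p \<in> set Ob" and q: "q \<in> set Ob'"
      have ua: "fst p \<in> admissible blk d" using pd[OF Ob] p by simp
      have ub: "fst q \<in> admissible blk d" using pd[OF Ob'] q by simp
      have gb: "\<And>u \<Psi>. u \<in> admissible blk d \<Longrightarrow> norm (grad (model u) \<Psi>) \<le> sqrt d"
      proof -
        fix u \<Psi> assume "u \<in> admissible blk d"
        then have n: "norm u \<le> sqrt d" using good_norm2(2) good by blast
        have "norm (grad (model u) \<Psi>) = sd (u \<bullet> \<Psi>) * norm u"
          unfolding grad_model using sd_bounds by simp
        also have "\<dots> \<le> 1 * sqrt d" using sd_bounds[of "u \<bullet> \<Psi>"] n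
          by (intro mult_mono) auto
        finally show "norm (grad (model u) \<Psi>) \<le> sqrt d" by simp
      qed
      have "norm (grad (\<lambda>\<Psi>. l (snd p) (model (fst p) \<Psi>)) \<Psi> - grad (\<lambda>\<Psi>. l (snd q) (model (fst q) \<Psi>)) \<Psi>')
          \<le> \<beta>' * norm (grad (model (fst p)) \<Psi> - grad (model (fst q)) \<Psi>')" by (rule A2[OF ua ub])
      also have "norm (grad (model (fst p)) \<Psi> - grad (model (fst q)) \<Psi>') \<le> sqrt d + sqrt d"
        using norm_triangle_ineq4[of "grad (model (fst p)) \<Psi>" "grad (model (fst q)) \<Psi>'"]
          gb[OF ua, of \<Psi>] gb[OF ub, of \<Psi>'] by linarith
      then have "\<beta>' * norm (grad (model (fst p)) \<Psi> - grad (model (fst q)) \<Psi>') \<le> \<beta>' * (sqrt d + sqrt d)"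
        using beta'0 by (simp add: mult_left_mono)
      finally show "norm (grad (\<lambda>\<Psi>. l (snd p) (model (fst p) \<Psi>)) \<Psi> - grad (\<lambda>\<Psi>. l (snd q) (model (fst q) \<Psi>)) \<Psi>')
          \<le> 2 * \<beta>' * sqrt d" by simp
    qed
  qed
  have K3: "\<And>(Ob::((real^'n) \<times> 'y) list) \<Psi> \<Psi>'. Ob \<in> proxy_data blk d \<Longrightarrow>
      \<bar>loss l Ob \<Psi> - loss l Ob \<Psi>'\<bar> \<le> \<beta> * sqrt d * norm (\<Psi> - \<Psi>')"
  proof -
    fix Ob :: "((real^'n) \<times> 'y) list" and \<Psi> \<Psi>' assume Ob: "Ob \<in> proxy_data blk d"
    have e: "\<And>\<Psi>. loss l Ob \<Psi> = (1 / real (length Ob)) *\<^sub>R (\<Sum>p\<leftarrow>Ob. l (snd p) (model (fst p) \<Psi>))"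
      unfolding loss_def by simp
    have "norm ((1 / real (length Ob)) *\<^sub>R (\<Sum>p\<leftarrow>Ob. l (snd p) (model (fst p) \<Psi>))
          - (1 / real (length Ob)) *\<^sub>R (\<Sum>p\<leftarrow>Ob. l (snd p) (model (fst p) \<Psi>'))) \<le> \<beta> * sqrt d * norm (\<Psi> - \<Psi>')"
    proof (rule mean_same)
      show "Ob \<noteq> []" using pd[OF Ob] by simp
      fix p assume p: "p \<in> set Ob"
      define u where "u = fst p"
      have ua: "u \<in> admissible blk d" using pd[OF Ob] p u_def by simp
      have n: "norm u \<le> sqrt d" using good_norm2(2) good[OF ua] by blast
      have "\<bar>l (snd p) (model u \<Psi>) - l (snd p) (model u \<Psi>')\<bar> \<le> \<beta> * \<bar>model u \<Psi> - model u \<Psi>'\<bar>"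
        by (rule A1)
      also have "\<bar>model u \<Psi> - model u \<Psi>'\<bar> \<le> \<bar>u \<bullet> \<Psi> - u \<bullet> \<Psi>'\<bar>"
        unfolding model_def by (rule sig_lip)
      also have "\<bar>u \<bullet> \<Psi> - u \<bullet> \<Psi>'\<bar> \<le> norm u * norm (\<Psi> - \<Psi>')"
        by (metis Cauchy_Schwarz_ineq2 inner_diff_right)
      also have "\<dots> \<le> sqrt d * norm (\<Psi> - \<Psi>')" by (intro mult_right_mono n) simp
      finally have "\<bar>l (snd p) (model u \<Psi>) - l (snd p) (model u \<Psi>')\<bar> \<le> \<beta> * (sqrt d * norm (\<Psi> - \<Psi>'))"
        using beta0 by (simp add: mult_left_mono)
      then show "norm (l (snd p) (model (fst p) \<Psi>) - l (snd p) (model (fst p) \<Psi>')) \<le> \<beta> * sqrt d * norm (\<Psi> - \<Psi>')"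
        using u_def by (simp add: mult.assoc)
    qed
    then show "\<bar>loss l Ob \<Psi> - loss l Ob \<Psi>'\<bar> \<le> \<beta> * sqrt d * norm (\<Psi> - \<Psi>')"
      unfolding e[of \<Psi>] e[of \<Psi>'] by simp
  qed
  define S' where "S' = S[m := O']"
  define D where "D = (\<lambda>js. norm (sgd l \<alpha> S \<Psi>0 js - sgd l \<alpha> S' \<Psi>0 js))"
  define r where "r = 1 + \<beta>' * d"
  define K where "K = 2 * \<beta>' * sqrt d"
  have r0: "r \<ge> 0" unfolding r_def using beta'0 by simp
  have K0: "K \<ge> 0" unfolding K_def using beta'0 by simp
  have Sj: "\<And>j. j < M \<Longrightarrow> S ! j \<in> proxy_data blk d" using S by auto
  have S'j: "\<And>j. j < M \<Longrightarrow> S' ! j \<in> proxy_data blk d"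
    unfolding S'_def using S O' m by (auto simp: nth_list_update split: if_splits)
  have step: "\<And>js j. j < M \<Longrightarrow> D (js @ [j]) \<le> r * D js + (if j = m then K else 0)"
  proof -
    fix js j assume j: "j < M"
    define P where "P = sgd l \<alpha> S \<Psi>0 js"
    define Q where "Q = sgd l \<alpha> S' \<Psi>0 js"
    have DD: "D js = norm (P - Q)" unfolding D_def P_def Q_def ..
    have "D (js @ [j]) = norm ((P - Q) - \<alpha> *\<^sub>R (grad (loss l (S ! j)) P - grad (loss l (S' ! j)) Q))"
      unfolding D_def sgd_snoc P_def Q_def by (simp add: algebra_simps)
    also have "\<dots> \<le> norm (P - Q) + \<alpha> * norm (grad (loss l (S ! j)) P - grad (loss l (S' ! j)) Q)"
      using norm_triangle_ineq4 alpha by (simp add: order_trans[OF norm_triangle_ineq4])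
    finally have b: "D (js @ [j]) \<le> norm (P - Q) + \<alpha> * norm (grad (loss l (S ! j)) P - grad (loss l (S' ! j)) Q)" .
    show "D (js @ [j]) \<le> r * D js + (if j = m then K else 0)"
    proof (cases "j = m")
      case True
      have "norm (grad (loss l (S ! j)) P - grad (loss l (S' ! j)) Q) \<le> K"
        unfolding K_def by (rule K2[OF Sj[OF j] S'j[OF j]])
      then have "\<alpha> * norm (grad (loss l (S ! j)) P - grad (loss l (S' ! j)) Q) \<le> 1 * K"
        using alpha K0 by (intro mult_mono) auto
      moreover have "norm (P - Q) \<le> r * norm (P - Q)" unfolding r_def using beta'0
        by (simp add: algebra_simps)
      ultimately show ?thesis using b True DD by simp
    next
      case False
      then have e: "S' ! j = S ! j" unfolding S'_def by simp
      have "norm (grad (loss l (S ! j)) P - grad (loss l (S ! j)) Q) \<le> \<beta>' * d * norm (P - Q)"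
        by (rule K1[OF Sj[OF j]])
      then have "\<alpha> * norm (grad (loss l (S ! j)) P - grad (loss l (S ! j)) Q) \<le> 1 * (\<beta>' * d * norm (P - Q))"
        using alpha beta'0 by (intro mult_mono) auto
      then show ?thesis using b False DD e unfolding r_def by (simp add: algebra_simps)
    qed
  qed
  define b where "b = (\<lambda>T. K / M * (\<Sum>t=1..T. r ^ (t - 1)))"
  have main: "expect_A M T D \<le> b T"
  proof (induction T)
    case 0
    show ?case unfolding expect_0 b_def D_def by (simp add: sgd_nil)
  next
    case (Suc T)
    have "expect_A M (Suc T) D = expect_A M T (\<lambda>js. (\<Sum>j<M. D (js @ [j])) / real M)"
      by (rule expect_Suc[OF M0])
    also have "\<dots> \<le> expect_A M T (\<lambda>js. r * D js + K / M)"
    proof (rule expect_mono)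
      fix js :: "nat list"
      have "(\<Sum>j<M. D (js @ [j])) \<le> (\<Sum>j<M. r * D js + (if j = m then K else 0))"
        by (rule sum_mono) (use step in auto)
      also have "\<dots> = M * (r * D js) + K" using m by (simp add: sum.distrib)
      finally show "(\<Sum>j<M. D (js @ [j])) / real M \<le> r * D js + K / M"
        using M0 by (simp add: divide_simps algebra_simps)
    qed
    also have "\<dots> = r * expect_A M T D + K / M" by (rule expect_affine[OF M0])
    also have "\<dots> \<le> r * b T + K / M" using Suc r0 by (simp add: mult_left_mono)
    also have "\<dots> = b (Suc T)" unfolding b_def geo by (simp add: algebra_simps)
    finally show ?case .
  qed
  have part1: "expect_A M T D \<le> 2 * \<beta>' * sqrt d / M * (\<Sum>t=1..T. (1 + \<beta>' * d) ^ (t - 1))"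
    using main unfolding b_def K_def r_def by simp
  have part2: "\<forall>Ob\<in>(proxy_data blk d :: ((real^'n) \<times> 'y) list set).
           \<bar>expect_A M T (\<lambda>js. loss l Ob (sgd l \<alpha> S \<Psi>0 js) - loss l Ob (sgd l \<alpha> S' \<Psi>0 js))\<bar>
           \<le> 2 * \<beta> * \<beta>' * d / M * (\<Sum>t=1..T. (1 + \<beta>' * d) ^ (t - 1))"
  proof
    fix Ob :: "((real^'n) \<times> 'y) list" assume Ob: "Ob \<in> proxy_data blk d"
    have "\<bar>expect_A M T (\<lambda>js. loss l Ob (sgd l \<alpha> S \<Psi>0 js) - loss l Ob (sgd l \<alpha> S' \<Psi>0 js))\<bar>
        \<le> expect_A M T (\<lambda>js. \<bar>loss l Ob (sgd l \<alpha> S \<Psi>0 js) - loss l Ob (sgd l \<alpha> S' \<Psi>0 js)\<bar>)"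
      by (rule expect_abs)
    also have "\<dots> \<le> expect_A M T (\<lambda>js. (\<beta> * sqrt d) * D js + 0)"
      by (rule expect_mono) (use K3[OF Ob] in \<open>simp add: D_def\<close>)
    also have "\<dots> = (\<beta> * sqrt d) * expect_A M T D + 0" by (rule expect_affine[OF M0])
    also have "\<dots> \<le> (\<beta> * sqrt d) * (2 * \<beta>' * sqrt d / M * (\<Sum>t=1..T. (1 + \<beta>' * d) ^ (t - 1)))"
      using mult_left_mono[OF part1, of "\<beta> * sqrt d"] beta0 by simp
    also have "\<dots> = 2 * \<beta> * \<beta>' * (sqrt d * sqrt d) / M * (\<Sum>t=1..T. (1 + \<beta>' * d) ^ (t - 1))"
      by (simp add: algebra_simps)
    also have "sqrt d * sqrt d = d" by simp
    finally show "\<bar>expect_A M T (\<lambda>js. loss l Ob (sgd l \<alpha> S \<Psi>0 js) - loss l Ob (sgd l \<alpha> S' \<Psi>0 js))\<bar>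
           \<le> 2 * \<beta> * \<beta>' * d / M * (\<Sum>t=1..T. (1 + \<beta>' * d) ^ (t - 1))" .
  qed
  show ?thesis using part1 part2 unfolding D_def S'_def by simp
qed
end
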